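(* Let $(X,d,\preceq)$ be an ordered metric space such that $(X,d)$ is complete, and let $f,g:X\to X$. Suppose: (i) $f(X)\subseteq g(X)$; (ii) $f$ is $g$-comparable; (iii) the pair $(f,g)$ is compatible; (iv) $g$ is continuous; (v) either $f$ is continuous or $(X,d,\preceq)$ has the $g$-TCC property; (vi) there exists $x_0\in X$ such that $g(x_0)\prec\succ f(x_0)$; (vii) there exists $\alpha\in[0,1)$ such that $d(fx,fy)\le \alpha\, d(gx,gy)$ for all $x,y\in X$ with $g(x)\prec\succ g(y)$. Then $f$ and $g$ have a coincidence point, i.e. there is $x\in X$ with $g(x)=f(x)$.
   Context: An ordered metric space $(X,d,\preceq)$ is a nonempty set $X$ with a metric $d$ and a partial order $\preceq$. For $x,y\in X$, write $x\prec\succ y$ ("comparable") if $x\preceq y$ or $y\preceq x$. For self-maps $f,g$ of $X$: $f$ is $g$-comparable if for all $x,y\in X$, $g(x)\prec\succ g(y)$ implies $f(x)\prec\succ f(y)$. The pair $(f,g)$ is compatible if $\lim_{n\to\infty} d(gfx_n,fgx_n)=0$ whenever $\{x_n\}$ is a sequence in $X$ such that $\{g(x_n)\}$ and $\{f(x_n)\}$ converge to the same point of $X$. A sequence $\{x_n\}$ is termwise monotone if $x_n\prec\succ x_{n+1}$ for all $n\ge 0$. $(X,d,\preceq)$ has the $g$-TCC property if for every termwise monotone sequence $\{x_n\}$ in $X$ converging (in $d$) to some $x\in X$ there is a subsequence $\{x_{n_k}\}$ with $g(x_{n_k})\prec\succ g(x)$ for all $k$. A coincidence point of $f,g$ is $x\in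 X$ with $g(x)=f(x)$. *)

theory Defs
  imports "HOL-Analysis.Analysis"
begin

definition partial_order_rel :: "('a \<Rightarrow> 'a \<Rightarrow> bool) \<Rightarrow> bool" where
  "partial_order_rel le \<longleftrightarrow> (\<forall>x. le x x) \<and> (\<forall>x y. le x y \<and> le y x \<longrightarrow> x = y)
     \<and> (\<forall>x y z. le x y \<and> le y z \<longrightarrow> le x z)"

definition comparable :: "('a \<Rightarrow> 'a \<Rightarrow> bool) \<Rightarrow> 'a \<Rightarrow> 'a \<Rightarrow> bool" where
  "comparable le x y \<longleftrightarrow> le x y \<or> le y x"

definition g_comparable :: "('a \<Rightarrow> 'a \<Rightarrow> bool) \<Rightarrow> ('a \<Rightarrow> 'a) \<Rightarrow> ('a \<Rightarrow> 'a) \<Rightarrow> bool" where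
  "g_comparable le f g \<longleftrightarrow> (\<forall>x y. comparable le (g x) (g y) \<longrightarrow> comparable le (f x) (f y))"

definition compatible_pair :: "('a::metric_space \<Rightarrow> 'a) \<Rightarrow> ('a \<Rightarrow> 'a) \<Rightarrow> bool" where
  "compatible_pair f g \<longleftrightarrow> (\<forall>xs :: nat \<Rightarrow> 'a. \<forall>z.
      (\<lambda>n. g (xs n)) \<longlonglongrightarrow> z \<and> (\<lambda>n. f (xs n)) \<longlonglongrightarrow> z
      \<longrightarrow> (\<lambda>n. dist (g (f (xs n))) (f (g (xs n)))) \<longlonglongrightarrow> 0)"

definition termwise_monotone :: "('a \<Rightarrow> 'a \<Rightarrow> bool) \<Rightarrow> (nat \<Rightarrow> 'a) \<Rightarrow> bool" where
  "termwise_monotone le xs \<longleftrightarrow> (\<forall>n. comparable le (xs n) (xs (Suc n)))"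

definition g_TCC :: "('a::metric_space \<Rightarrow> 'a \<Rightarrow> bool) \<Rightarrow> ('a \<Rightarrow> 'a) \<Rightarrow> bool" where
  "g_TCC le g \<longleftrightarrow> (\<forall>(xs :: nat \<Rightarrow> 'a) (x :: 'a). termwise_monotone le xs \<and> xs \<longlonglongrightarrow> x \<longrightarrow>
      (\<exists>r :: nat \<Rightarrow> nat. strict_mono r \<and> (\<forall>k. comparable le (g (xs (r k))) (g x))))"

end

theory Submission
  imports Defs
begin

lemma contr_Cauchy:
  fixes y :: "nat \<Rightarrow> 'a::metric_space" and a :: real
  assumes a0: "0 \<le> a" and a1: "a < 1"
    and c: "\<And>n. dist (y (Suc n)) (y (Suc (Suc n))) \<le> a * dist (y n) (y (Suc n))"
  shows "Cauchy y"
proof -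
  define D where "D = dist (y 0) (y 1)"
  have D0: "D \<ge> 0" by (simp add: D_def)
  have step: "dist (y n) (y (Suc n)) \<le> D * a^n" for n
  proof (induction n)
    case 0 then show ?case by (simp add: D_def)
  next
    case (Suc n)
    have "dist (y (Suc n)) (y (Suc (Suc n))) \<le> a * dist (y n) (y (Suc n))" by (rule c)
    also have "\<dots> \<le> a * (D * a^n)" using Suc a0 by (simp add: mult_left_mono)
    finally show ?case by (simp add: algebra_simps)
  qed
  have sumb: "dist (y m) (y (m+k)) \<le> D * (\<Sum>i<k. a^(m+i))" for m k
  proof (induction k)
    case 0 then show ?case by simp
  next
    case (Suc k)
    have "dist (y m) (y (m + Suc k)) \<le> dist (y m) (y (m+k)) + dist (y (m+k)) (y (Suc (m+k)))"
      by (simp add: dist_triangle)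
    also have "\<dots> \<le> D * (\<Sum>i<k. a^(m+i)) + D * a^(m+k)" using Suc step by (meson add_mono)
    also have "\<dots> = D * (\<Sum>i<Suc k. a^(m+i))" by (simp add: algebra_simps)
    finally show ?case .
  qed
  have gb: "(\<Sum>i<k. a^(m+i)) \<le> a^m / (1-a)" for m k
  proof -
    have "(\<Sum>i<k. a^(m+i)) = a^m * (\<Sum>i<k. a^i)" by (simp add: power_add sum_distrib_left)
    also have "(\<Sum>i<k. a^i) = (1 - a^k)/(1-a)" using a1 by (simp add: sum_gp_strict)
    also have "(1 - a^k)/(1-a) \<le> 1/(1-a)" using a0 a1 by (simp add: divide_right_mono)
    hence "a^m * ((1 - a^k)/(1-a)) \<le> a^m * (1/(1-a))" using a0 by (intro mult_left_mono) auto
    finally show ?thesis by simp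
  qed
  have tail: "dist (y m) (y (m+k)) \<le> D * a^m / (1-a)" for m k
  proof -
    have "dist (y m) (y (m+k)) \<le> D * (\<Sum>i<k. a^(m+i))" by (rule sumb)
    also have "\<dots> \<le> D * (a^m/(1-a))" using gb D0 by (intro mult_left_mono) auto
    finally show ?thesis by simp
  qed
  have lim: "(\<lambda>n. D * a^n / (1-a)) \<longlonglongrightarrow> 0"
    using a0 a1 by (intro tendsto_eq_intros LIMSEQ_power_zero) auto
  show ?thesis unfolding Cauchy_altdef2
  proof (intro allI impI)
    fix e :: real assume "e > 0"
    then obtain N where N: "\<And>n. n \<ge> N \<Longrightarrow> \<bar>D * a^n / (1-a) - 0\<bar> < e"
      using lim unfolding LIMSEQ_def dist_real_def by blast
    have "dist (y n) (y N) < e" if "n \<ge> N" for n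
    proof -
      have "dist (y N) (y (N + (n-N))) \<le> D * a^N/(1-a)" by (rule tail)
      moreover have "D * a^N/(1-a) < e" 
      proof -
        have "\<bar>D * a^N\<bar> = D * a^N" using D0 a0 by simp
        moreover have "\<bar>1 - a\<bar> = 1 - a" using a1 by simp
        ultimately show ?thesis using N[of N] by (simp add: abs_divide)
      qed
      ultimately show ?thesis using that by (simp add: dist_commute)
    qed
    then show "\<exists>N. \<forall>n\<ge>N. dist (y n) (y N) < e" by blast
  qed
qed

lemma dist_transfer:
  fixes a b :: "nat \<Rightarrow> 'a::metric_space"
  assumes "a \<longlonglongrightarrow> L" "(\<lambda>n. dist (a n) (b n)) \<longlonglongrightarrow> 0"
  shows "b \<longlonglongrightarrow> L"
proof -
  have "(\<lambda>n. dist (a n) L) \<longlonglongrightarrow> 0" using assms(1) tendsto_dist_iff by blast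
  hence s: "(\<lambda>n. dist (a n) (b n) + dist (a n) L) \<longlonglongrightarrow> 0"
    using assms(2) tendsto_add_zero by blast
  have "(\<lambda>n. dist (b n) L) \<longlonglongrightarrow> 0"
  proof (rule tendsto_sandwich[of "\<lambda>n. 0" _ _ "\<lambda>n. dist (a n) (b n) + dist (a n) L"])
    show "\<forall>\<^sub>F n in sequentially. 0 \<le> dist (b n) L" by simp
    show "\<forall>\<^sub>F n in sequentially. dist (b n) L \<le> dist (a n) (b n) + dist (a n) L"
      by (simp add: dist_triangle3)
  qed (use s in auto)
  thus ?thesis using tendsto_dist_iff by blast
qed

lemma allE2: "\<forall>x y. P x y \<Longrightarrow> P a b" by blast

theorem theorem3p3:
  fixes le :: "'a::complete_space \<Rightarrow> 'a \<Rightarrow> bool"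
    and f g :: "'a \<Rightarrow> 'a"
  assumes "partial_order_rel le"
    and "range f \<subseteq> range g"
    and "g_comparable le f g"
    and "compatible_pair f g"
    and "continuous_on UNIV g"
    and "continuous_on UNIV f \<or> g_TCC le g"
    and "\<exists>x0. comparable le (g x0) (f x0)"
    and "\<exists>\<alpha>::real. 0 \<le> \<alpha> \<and> \<alpha> < 1 \<and>
           (\<forall>x y. comparable le (g x) (g y) \<longrightarrow> dist (f x) (f y) \<le> \<alpha> * dist (g x) (g y))"
  shows "\<exists>x. g x = f x"
proof -
  obtain x0 where x0: "comparable le (g x0) (f x0)" using assms(7) by blast
  obtain \<alpha> :: real where a0: "0 \<le> \<alpha>" and a1: "\<alpha> < 1"
    and con: "\<And>x y. comparable le (g x) (g y) \<Longrightarrow> dist (f x) (f y) \<le> \<alpha> * dist (g x) (g y)"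
    using assms(8) by blast
  have "\<forall>y. \<exists>z. g z = f y" using assms(2) by (metis rangeE rangeI subsetD)
  then obtain h where h: "\<And>y. g (h y) = f y" by metis
  define xs where "xs = rec_nat x0 (\<lambda>_. h)"
  have xs0: "xs 0 = x0" and xsS: "\<And>n. xs (Suc n) = h (xs n)" by (simp_all add: xs_def)
  have gS: "g (xs (Suc n)) = f (xs n)" for n by (simp add: xsS h)
  have comp: "comparable le (g (xs n)) (g (xs (Suc n)))" for n
  proof (induction n)
    case 0 then show ?case using x0 by (simp add: xs0 gS)
  next
    case (Suc n)
    then have "comparable le (f (xs n)) (f (xs (Suc n)))"
      using assms(3) unfolding g_comparable_def by blast
    then show ?case by (simp add: gS)
  qed
  have "Cauchy (\<lambda>n. g (xs n))"
  proof (rule contr_Cauchy[OF a0 a1])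
    fix n
    show "dist (g (xs (Suc n))) (g (xs (Suc (Suc n)))) \<le> \<alpha> * dist (g (xs n)) (g (xs (Suc n)))"
      using con[OF comp[of n]] by (simp add: gS)
  qed
  then obtain z where gz: "(\<lambda>n. g (xs n)) \<longlonglongrightarrow> z"
    using Cauchy_convergent convergent_def by blast
  have fz: "(\<lambda>n. f (xs n)) \<longlonglongrightarrow> z"
    using LIMSEQ_Suc[OF gz] by (simp add: gS)
  have cmp: "(\<lambda>n. dist (g (f (xs n))) (f (g (xs n)))) \<longlonglongrightarrow> 0"
    using assms(4) gz fz unfolding compatible_pair_def by blast
  have gc: "isCont g x" for x using assms(5) by (simp add: continuous_on_eq_continuous_at)
  have gfz: "(\<lambda>n. g (f (xs n))) \<longlonglongrightarrow> g z" using isCont_tendsto_compose[OF gc fz] .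
  have fgz: "(\<lambda>n. f (g (xs n))) \<longlonglongrightarrow> g z" using dist_transfer[OF gfz cmp] .
  have ggz: "(\<lambda>n. g (g (xs n))) \<longlonglongrightarrow> g z" using isCont_tendsto_compose[OF gc gz] .
  show ?thesis
  proof (cases "continuous_on UNIV f")
    case True
    have "isCont f x" for x using True by (simp add: continuous_on_eq_continuous_at)
    then have "(\<lambda>n. f (g (xs n))) \<longlonglongrightarrow> f z" using isCont_tendsto_compose gz by blast
    then have "g z = f z" using fgz LIMSEQ_unique by blast
    then show ?thesis by blast
  next
    case False
    then have tcc: "g_TCC le g" using assms(6) by blast
    have "termwise_monotone le (\<lambda>n. g (xs n))" unfolding termwise_monotone_def using comp by blast
    obtain r :: "nat \<Rightarrow> nat" where r: "strict_mono r" and rc: "\<And>k. comparable le (g (g (xs (r k)))) (g z)"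
    proof -
      note tm = \<open>termwise_monotone le (\<lambda>n. g (xs n))\<close>
      have "\<exists>r::nat\<Rightarrow>nat. strict_mono r \<and> (\<forall>k. comparable le (g ((\<lambda>n. g (xs n)) (r k))) (g z))"
      proof -
        have "\<forall>(ys :: nat \<Rightarrow> 'a) (x :: 'a). termwise_monotone le ys \<and> ys \<longlonglongrightarrow> x \<longrightarrow>
          (\<exists>r :: nat \<Rightarrow> nat. strict_mono r \<and> (\<forall>k. comparable le (g (ys (r k))) (g x)))"
          using tcc unfolding g_TCC_def .
        then have "termwise_monotone le (\<lambda>n. g (xs n)) \<and> (\<lambda>n. g (xs n)) \<longlonglongrightarrow> z \<longrightarrow>
          (\<exists>r :: nat \<Rightarrow> nat. strict_mono r \<and> (\<forall>k. comparable le (g ((\<lambda>n. g (xs n)) (r k))) (g z)))"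
          by (rule allE2)
        then show ?thesis using tm gz by (rule mp[OF _ conjI])
      qed
      then obtain r :: "nat \<Rightarrow> nat" where "strict_mono r" "\<forall>k. comparable le (g (g (xs (r k)))) (g z)"
        by blast
      then show ?thesis using that by blast
    qed
    have "(\<lambda>k. g (g (xs (r k)))) \<longlonglongrightarrow> g z"
      using LIMSEQ_subseq_LIMSEQ[OF ggz r] by (simp add: o_def)
    then have d0: "(\<lambda>k. dist (g (g (xs (r k)))) (g z)) \<longlonglongrightarrow> 0" by (rule tendsto_dist_iff[THEN iffD1])
    have d1: "(\<lambda>k. \<alpha> * dist (g (g (xs (r k)))) (g z)) \<longlonglongrightarrow> 0"
      using tendsto_mult_right_zero[OF d0] by simp
    have "(\<lambda>k. dist (f (g (xs (r k)))) (f z)) \<longlonglongrightarrow> 0"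
    proof (rule tendsto_sandwich[of "\<lambda>n. 0" _ _ "\<lambda>k. \<alpha> * dist (g (g (xs (r k)))) (g z)"])
      show "\<forall>\<^sub>F n in sequentially. 0 \<le> dist (f (g (xs (r n)))) (f z)" by simp
      show "\<forall>\<^sub>F n in sequentially. dist (f (g (xs (r n)))) (f z) \<le> \<alpha> * dist (g (g (xs (r n)))) (g z)"
        using con[OF rc] by simp
    qed (use d1 in auto)
    then have l1: "(\<lambda>k. f (g (xs (r k)))) \<longlonglongrightarrow> f z" by (rule tendsto_dist_iff[THEN iffD2])
    have l2: "(\<lambda>k. f (g (xs (r k)))) \<longlonglongrightarrow> g z"
      using LIMSEQ_subseq_LIMSEQ[OF fgz r] by (simp add: o_def)
    have "g z = f z" using LIMSEQ_unique[OF l2 l1] .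
    then show ?thesis by blast
  qed
qed

end
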